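(* Let $G$ be a graph and $v$ a vertex of $G$. Then $$\phi(G)\le \phi(G-v)+\phi(G-N[v])+\sum_{u\in N(v)}\phi\big(G-(N[v]\cup N[u])\big).$$ Moreover, if there exists a vertex $w\in N(v)$ with $N[w]\subseteq N[v]$, then $$\phi(G)\le \phi(G-v)+\sum_{u\in N(v)}\phi\big(G-(N[v]\cup N[u])\big).$$
   Context: Graphs are finite and simple. $N(v)$ is the neighborhood of $v$, $N[v]=N(v)\cup\{v\}$, and $G-S$ is the subgraph induced by $V(G)\setminus S$. A subset $F$ of vertices is a dissociation set if $G[F]$ has maximum degree at most $1$; a maximal dissociation set is one not properly contained in another dissociation set; $\phi(G)$ is the number of maximal dissociation sets of $G$, with $\phi=1$ for the graph with no vertices. *)

theory Defs
  imports Main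
begin

text \<open>Induced subgraphs
  G[S] (S a subset of V) are represented by the pair (E, S): the edge relation
  restricted to S.\<close>

definition simple_graph :: "'a set \<Rightarrow> ('a \<Rightarrow> 'a \<Rightarrow> bool) \<Rightarrow> bool" where
  "simple_graph V E \<longleftrightarrow> finite V \<and> (\<forall>x y. E x y \<longrightarrow> E y x)
     \<and> (\<forall>x. \<not> E x x) \<and> (\<forall>x y. E x y \<longrightarrow> x \<in> V \<and> y \<in> V)"

definition open_nbhd :: "'a set \<Rightarrow> ('a \<Rightarrow> 'a \<Rightarrow> bool) \<Rightarrow> 'a \<Rightarrow> 'a set" where
  "open_nbhd V E v = {u \<in> V. E v u}"

definition closed_nbhd :: "'a set \<Rightarrow> ('a \<Rightarrow> 'a \<Rightarrow> bool) \<Rightarrow> 'a \<Rightarrow> 'a set" where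
  "closed_nbhd V E v = insert v (open_nbhd V E v)"

definition dissociation_set :: "('a \<Rightarrow> 'a \<Rightarrow> bool) \<Rightarrow> 'a set \<Rightarrow> 'a set \<Rightarrow> bool" where
  "dissociation_set E S F \<longleftrightarrow> F \<subseteq> S \<and> (\<forall>x\<in>F. card {y \<in> F. E x y} \<le> 1)"

definition maximal_dissociation_set :: "('a \<Rightarrow> 'a \<Rightarrow> bool) \<Rightarrow> 'a set \<Rightarrow> 'a set \<Rightarrow> bool" where
  "maximal_dissociation_set E S F \<longleftrightarrow> dissociation_set E S F
     \<and> \<not> (\<exists>F'. F \<subset> F' \<and> dissociation_set E S F')"

text \<open>phi of the induced subgraph G[S]: number of maximal dissociation sets
  (equals 1 when S is empty, the only one being the empty set).\<close>
definition phi :: "('a \<Rightarrow> 'a \<Rightarrow> bool) \<Rightarrow> 'a set \<Rightarrow> nat" where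
  "phi E S = card {F. maximal_dissociation_set E S F}"

end

theory Submission
  imports Defs
begin

definition dis :: "('a \<Rightarrow> 'a \<Rightarrow> bool) \<Rightarrow> 'a set \<Rightarrow> 'a set \<Rightarrow> bool" where
  "dis E S F \<longleftrightarrow> F \<subseteq> S \<and> (\<forall>x\<in>F. \<forall>y\<in>F. \<forall>z\<in>F. E x y \<longrightarrow> E x z \<longrightarrow> y = z)"

lemma diss_iff:
  assumes "finite S"
  shows "dissociation_set E S F \<longleftrightarrow> dis E S F"
proof
  assume a: "dissociation_set E S F"
  hence fin: "finite F" using assms finite_subset unfolding dissociation_set_def by blast
  show "dis E S F" unfolding dis_def
  proof (intro conjI ballI impI)
    show "F \<subseteq> S" using a unfolding dissociation_set_def by blast
  next
    fix x y z assume "x \<in> F" "y \<in> F" "z \<in> F" "E x y" "E x z"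
    have "card {y \<in> F. E x y} \<le> Suc 0" using a \<open>x \<in> F\<close> unfolding dissociation_set_def by simp
    hence "\<forall>a1\<in>{y \<in> F. E x y}. \<forall>a2\<in>{y \<in> F. E x y}. a1 = a2"
      using card_le_Suc0_iff_eq[of "{y \<in> F. E x y}"] fin by simp
    thus "y = z" using \<open>y \<in> F\<close> \<open>z \<in> F\<close> \<open>E x y\<close> \<open>E x z\<close> by blast
  qed
next
  assume a: "dis E S F"
  hence fin: "finite F" using assms finite_subset unfolding dis_def by blast
  show "dissociation_set E S F" unfolding dissociation_set_def
  proof (intro conjI ballI)
    show "F \<subseteq> S" using a unfolding dis_def by blast
  next
    fix x assume "x \<in> F"
    have "\<forall>a1\<in>{y \<in> F. E x y}. \<forall>a2\<in>{y \<in> F. E x y}. a1 = a2"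
      using a \<open>x \<in> F\<close> unfolding dis_def by blast
    hence "card {y \<in> F. E x y} \<le> Suc 0"
      using card_le_Suc0_iff_eq[of "{y \<in> F. E x y}"] fin by simp
    thus "card {y \<in> F. E x y} \<le> 1" by simp
  qed
qed

lemma max_iff:
  assumes "finite S"
  shows "maximal_dissociation_set E S F \<longleftrightarrow> dis E S F \<and> (\<forall>F'. F \<subset> F' \<longrightarrow> \<not> dis E S F')"
  unfolding maximal_dissociation_set_def using diss_iff[OF assms] by blast

lemma finM: "finite S \<Longrightarrow> finite {F. maximal_dissociation_set E S F}"
  by (rule finite_subset[of _ "Pow S"])
     (auto simp: maximal_dissociation_set_def dissociation_set_def)

lemma case1:
  assumes "finite V" "maximal_dissociation_set E V F" "v \<notin> F"
  shows "maximal_dissociation_set E (V - {v}) F"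
  using assms by (auto simp: max_iff dis_def)

lemma case2:
  assumes g: "simple_graph V E" and m: "maximal_dissociation_set E V F" and "v \<in> F"
    and nn: "\<forall>y\<in>F. \<not> E v y"
  shows "maximal_dissociation_set E (V - closed_nbhd V E v) (F - {v})"
proof -
  have fin: "finite V" and sym: "\<And>x y. E x y \<Longrightarrow> E y x" and irr: "\<And>x. \<not> E x x"
    using g unfolding simple_graph_def by auto
  have finS: "finite (V - closed_nbhd V E v)" using fin by simp
  have d: "dis E V F" and mx: "\<And>F'. F \<subset> F' \<Longrightarrow> \<not> dis E V F'" using m max_iff[OF fin] by auto
  have d0: "dis E (V - closed_nbhd V E v) (F - {v})"
    using d nn unfolding dis_def closed_nbhd_def open_nbhd_def by blast
  moreover have "\<not> dis E (V - closed_nbhd V E v) F'" if "F - {v} \<subset> F'" for F'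
  proof
    assume d': "dis E (V - closed_nbhd V E v) F'"
    have sub: "F' \<subseteq> V" "\<forall>x\<in>F'. \<not> E v x \<and> \<not> E x v \<and> x \<noteq> v"
      using d' sym unfolding dis_def closed_nbhd_def open_nbhd_def by blast+
    have d'': "\<forall>x\<in>F'. \<forall>y\<in>F'. \<forall>z\<in>F'. E x y \<longrightarrow> E x z \<longrightarrow> y = z"
      using d' unfolding dis_def by blast
    have "v \<in> V" using d \<open>v \<in> F\<close> unfolding dis_def by blast
    have "dis E V (insert v F')"
      unfolding dis_def
    proof (intro conjI ballI impI)
      show "insert v F' \<subseteq> V" using sub \<open>v \<in> V\<close> by blast
    next
      fix x y z assume xyz: "x \<in> insert v F'" "y \<in> insert v F'"
        "z \<in> insert v F'" "E x y" "E x z"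
      show "y = z"
      proof (cases "x = v")
        case True then show ?thesis using xyz sub irr by blast
      next
        case False
        hence "x \<in> F'" "y \<in> F'" "z \<in> F'" using xyz sub by auto
        then show ?thesis using d'' xyz by blast
      qed
    qed
    moreover have "F \<subset> insert v F'" using that \<open>v \<in> F\<close> d' unfolding dis_def closed_nbhd_def by blast
    ultimately show False using mx by blast
  qed
  ultimately show ?thesis using max_iff[OF finS] by blast
qed

lemma case3:
  assumes g: "simple_graph V E" and m: "maximal_dissociation_set E V F" and "v \<in> F"
    and "u \<in> F" and "E v u"
  shows "maximal_dissociation_set E (V - (closed_nbhd V E v \<union> closed_nbhd V E u)) (F - {v, u})"
proof -
  have fin: "finite V" and sym: "\<And>x y. E x y \<Longrightarrow> E y x" and irr: "\<And>x. \<not> E x x"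
    using g unfolding simple_graph_def by auto
  let ?S = "V - (closed_nbhd V E v \<union> closed_nbhd V E u)"
  have finS: "finite ?S" using fin by simp
  have d: "dis E V F" and mx: "\<And>F'. F \<subset> F' \<Longrightarrow> \<not> dis E V F'" using m max_iff[OF fin] by auto
  have uv: "\<forall>y\<in>F. E v y \<longrightarrow> y = u" "\<forall>y\<in>F. E u y \<longrightarrow> y = v"
    using d \<open>v \<in> F\<close> \<open>u \<in> F\<close> \<open>E v u\<close> sym unfolding dis_def by blast+
  have d0: "dis E ?S (F - {v, u})"
    using d uv unfolding dis_def closed_nbhd_def open_nbhd_def by blast
  moreover have "\<not> dis E ?S F'" if "F - {v, u} \<subset> F'" for F'
  proof
    assume d': "dis E ?S F'"
    have sub: "F' \<subseteq> V" "\<forall>x\<in>F'. \<not> E v x \<and> \<not> E u x \<and> x \<noteq> v \<and> x \<noteq> u"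
      using d' unfolding dis_def closed_nbhd_def open_nbhd_def by blast+
    have inV: "u \<in> V" "v \<in> V" using d \<open>v \<in> F\<close> \<open>u \<in> F\<close> unfolding dis_def by blast+
    have "dis E V (insert v (insert u F'))"
      unfolding dis_def
    proof (intro conjI ballI impI)
      show "insert v (insert u F') \<subseteq> V" using sub inV by blast
    next
      fix x y z assume xyz: "x \<in> insert v (insert u F')" "y \<in> insert v (insert u F')"
        "z \<in> insert v (insert u F')" "E x y" "E x z"
      have d'': "\<forall>x\<in>F'. \<forall>y\<in>F'. \<forall>z\<in>F'. E x y \<longrightarrow> E x z \<longrightarrow> y = z"
        using d' unfolding dis_def by blast
      have nb: "\<forall>x\<in>F'. \<not> E x v \<and> \<not> E x u" using sub sym by blast
      show "y = z"
      proof (cases "x = v")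
        case True then show ?thesis using xyz sub irr by blast
      next
        case F1: False
        show ?thesis
        proof (cases "x = u")
          case True then show ?thesis using xyz sub irr by blast
        next
          case False
          hence "x \<in> F'" using F1 xyz by auto
          hence "y \<in> F'" "z \<in> F'" using xyz nb by auto
          then show ?thesis using d'' xyz \<open>x \<in> F'\<close> by blast
        qed
      qed
    qed
    moreover have "F \<subset> insert v (insert u F')" using that \<open>v \<in> F\<close> \<open>u \<in> F\<close> sub by blast
    ultimately show False using mx by blast
  qed
  ultimately show ?thesis using max_iff[OF finS] by blast
qed

lemma no_isolated_v:
  assumes g: "simple_graph V E" and m: "maximal_dissociation_set E V F" and "v \<in> F"
    and nn: "\<forall>y\<in>F. \<not> E v y" and w: "w \<in> open_nbhd V E v"
    and sw: "closed_nbhd V E w \<subseteq> closed_nbhd V E v"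
  shows False
proof -
  have fin: "finite V" and sym: "\<And>x y. E x y \<Longrightarrow> E y x" and irr: "\<And>x. \<not> E x x"
    and ev: "\<And>x y. E x y \<Longrightarrow> x \<in> V"
    using g unfolding simple_graph_def by auto
  have d: "dis E V F" and mx: "\<And>F'. F \<subset> F' \<Longrightarrow> \<not> dis E V F'" using m max_iff[OF fin] by auto
  have wV: "w \<in> V" "E v w" using w unfolding open_nbhd_def by auto
  have wF: "w \<notin> F" using nn wV by blast
  have wn: "\<And>x. E w x \<Longrightarrow> x = v \<or> E v x"
    using sw wV ev sym unfolding closed_nbhd_def open_nbhd_def by blast
  have d'': "\<forall>x\<in>F. \<forall>y\<in>F. \<forall>z\<in>F. E x y \<longrightarrow> E x z \<longrightarrow> y = z"
    using d unfolding dis_def by blast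
  have "dis E V (insert w F)"
    unfolding dis_def
  proof (intro conjI ballI impI)
    show "insert w F \<subseteq> V" using d wV unfolding dis_def by blast
  next
    fix x y z assume xyz: "x \<in> insert w F" "y \<in> insert w F"
      "z \<in> insert w F" "E x y" "E x z"
    show "y = z"
    proof (cases "x = w")
      case True
      hence "y = v" "z = v" using xyz wn nn irr by blast+
      thus ?thesis by simp
    next
      case F1: False
      hence xF: "x \<in> F" using xyz by auto
      show ?thesis
      proof (cases "x = v")
        case True then show ?thesis using xyz nn irr by blast
      next
        case False
        have "\<not> E x w" using wn sym xF nn False by blast
        hence "y \<in> F" "z \<in> F" using xyz by auto
        then show ?thesis using d'' xyz xF by blast
      qed
    qed
  qed
  moreover have "F \<subset> insert w F" using wF by blast
  ultimately show False using mx by blast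
qed

theorem lemma2p2:
  fixes V :: "'a set" and E :: "'a \<Rightarrow> 'a \<Rightarrow> bool" and v :: 'a
  assumes "simple_graph V E" and "v \<in> V"
  shows "phi E V \<le> phi E (V - {v}) + phi E (V - closed_nbhd V E v)
            + (\<Sum>u\<in>open_nbhd V E v. phi E (V - (closed_nbhd V E v \<union> closed_nbhd V E u)))
         \<and> ((\<exists>w\<in>open_nbhd V E v. closed_nbhd V E w \<subseteq> closed_nbhd V E v) \<longrightarrow>
          phi E V \<le> phi E (V - {v})
            + (\<Sum>u\<in>open_nbhd V E v. phi E (V - (closed_nbhd V E v \<union> closed_nbhd V E u))))"
proof -
  have g: "simple_graph V E" by fact
  have fin: "finite V" and ev: "\<And>x y. E x y \<Longrightarrow> y \<in> V"
    using g unfolding simple_graph_def by auto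
  define M where "M = (\<lambda>S. {F. maximal_dissociation_set E S F})"
  define N where "N = open_nbhd V E v"
  define C where "C = (\<lambda>u. V - (closed_nbhd V E v \<union> closed_nbhd V E u))"
  define A where "A = M (V - {v})"
  define B where "B = insert v ` M (V - closed_nbhd V E v)"
  define U where "U = (\<Union>u\<in>N. (\<lambda>F. insert v (insert u F)) ` M (C u))"
  have finN: "finite N" using fin unfolding N_def open_nbhd_def by simp
  have finM': "\<And>S. S \<subseteq> V \<Longrightarrow> finite (M S)" unfolding M_def
    using finM fin finite_subset by blast
  have fA: "finite A" unfolding A_def using finM' by blast
  have fB: "finite B" unfolding B_def using finM' by blast
  have fU: "finite U" unfolding U_def
    by (intro finite_UN_I finN finite_imageI finM') (auto simp: C_def)
  have cA: "card A = phi E (V - {v})" unfolding A_def M_def phi_def ..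
  have cB: "card B \<le> phi E (V - closed_nbhd V E v)" unfolding B_def M_def phi_def
    by (rule card_image_le) (use finM' in \<open>simp add: M_def\<close>)
  have cU: "card U \<le> (\<Sum>u\<in>N. phi E (C u))"
  proof -
    have "card U \<le> (\<Sum>u\<in>N. card ((\<lambda>F. insert v (insert u F)) ` M (C u)))"
      unfolding U_def by (rule card_UN_le[OF finN])
    also have "\<dots> \<le> (\<Sum>u\<in>N. phi E (C u))"
      by (rule sum_mono, unfold phi_def M_def, rule card_image_le) (use finM' in \<open>auto simp: M_def C_def\<close>)
    finally show ?thesis .
  qed
  have cover: "F \<in> A \<or> (F \<in> B \<and> v \<in> F \<and> (\<forall>y\<in>F. \<not> E v y)) \<or> F \<in> U" if "F \<in> M V" for F
  proof -
    have m: "maximal_dissociation_set E V F" using that unfolding M_def by simp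
    show ?thesis
    proof (cases "v \<in> F")
      case False thus ?thesis using case1[OF fin m] unfolding A_def M_def by blast
    next
      case vF: True
      show ?thesis
      proof (cases "\<exists>u\<in>F. E v u")
        case True
        then obtain u where u: "u \<in> F" "E v u" by blast
        have "u \<in> N" using u ev unfolding N_def open_nbhd_def by blast
        moreover have "F = insert v (insert u (F - {v, u}))" using u vF by blast
        moreover have "F - {v,u} \<in> M (C u)" using case3[OF g m vF u] unfolding M_def C_def by simp
        ultimately have "F \<in> U" unfolding U_def by blast
        thus ?thesis by blast
      next
        case False
        hence "\<forall>y\<in>F. \<not> E v y" by blast
        moreover have "F = insert v (F - {v})" using vF by blast
        moreover have "F - {v} \<in> M (V - closed_nbhd V E v)"
          using case2[OF g m vF] False unfolding M_def by blast
        ultimately have "F \<in> B" unfolding B_def by blast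
        thus ?thesis using vF \<open>\<forall>y\<in>F. \<not> E v y\<close> by blast
      qed
    qed
  qed
  have part1: "phi E V \<le> phi E (V - {v}) + phi E (V - closed_nbhd V E v) + (\<Sum>u\<in>N. phi E (C u))"
  proof -
    have "M V \<subseteq> A \<union> B \<union> U" using cover by blast
    hence "phi E V \<le> card (A \<union> B \<union> U)" unfolding phi_def M_def
      using fA fB fU by (intro card_mono) auto
    also have "\<dots> \<le> card A + card B + card U"
      by (meson card_Un_le add_le_mono order_trans le_refl)
    finally show ?thesis using cA cB cU by linarith
  qed
  have part2: "phi E V \<le> phi E (V - {v}) + (\<Sum>u\<in>N. phi E (C u))"
    if ex: "\<exists>w\<in>N. closed_nbhd V E w \<subseteq> closed_nbhd V E v"
  proof -
    obtain w where w: "w \<in> open_nbhd V E v" "closed_nbhd V E w \<subseteq> closed_nbhd V E v"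
      using ex unfolding N_def by blast
    have "M V \<subseteq> A \<union> U"
    proof
      fix F assume F: "F \<in> M V"
      have m: "maximal_dissociation_set E V F" using F unfolding M_def by simp
      show "F \<in> A \<union> U" using cover[OF F] no_isolated_v[OF g m _ _ w] by blast
    qed
    hence "phi E V \<le> card (A \<union> U)" unfolding phi_def M_def
      using fA fU by (intro card_mono) auto
    also have "\<dots> \<le> card A + card U" by (rule card_Un_le)
    finally show ?thesis using cA cU by linarith
  qed
  show ?thesis using part1 part2 unfolding N_def C_def by simp
qed

end
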